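(* Let $n$ be a positive integer, let $\dot C_t$ be a colored chain on $t$ vertices, and let $\alpha=\alpha(\dot C_t)$. Then $$\tilde{R}(\dot C^{(rbr)}_{\alpha},Q_n)\le \tilde{R}(\dot C_t,Q_n)\le \tilde{R}(\dot C^{(rbr)}_{\alpha},Q_n)+t-\alpha.$$
   Context: A chain $C_t$ is a poset on $t$ pairwise comparable vertices; a colored chain has each vertex colored blue or red. The red-alternating chain $\dot C_a^{(rbr)}$ is $C_a$ colored alternately red and blue starting with a red minimal vertex; the blue-alternating chain $\dot C_a^{(brb)}$ is colored alternately starting with a blue minimal vertex. For a colored chain $\dot C$, $\alpha(\dot C)$ is the maximum $a$ such that $\dot C$ contains a copy of $\dot C_a^{(rbr)}$ or of $\dot C_a^{(brb)}$ (i.e. a subchain of $a$ vertices colored in that way). $Q_N$ is the Boolean lattice of all subsets of an $N$-element set ordered by inclusion. In a blue/red coloring of $Q_N$, a copy of a colored poset $\dot P$ is an induced subposet isomorphic to $P$ with matching colors. The poset Erdős–Hajnal number $\tilde{R}(\dot P,Q_n)$ is the minimum $N$ such that every blue/red coloring of $Q_N$ contains a copy of $\dot P$ or a monochromatic induced copy of $Q_n$. *)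

theory Defs
  imports Main "HOL-Library.Sublist"
begin

datatype color = Blue | Red

text \<open>A colored chain on t vertices is a list of t colors, listed from the minimal
  vertex (index 0) to the maximal vertex.\<close>
type_synonym cchain = "color list"

definition rbr_chain :: "nat \<Rightarrow> cchain" where
  "rbr_chain a = map (\<lambda>i. if even i then Red else Blue) [0..<a]"

definition brb_chain :: "nat \<Rightarrow> cchain" where
  "brb_chain a = map (\<lambda>i. if even i then Blue else Red) [0..<a]"

definition alpha :: "cchain \<Rightarrow> nat" where
  "alpha ch = Max {a. subseq (rbr_chain a) ch \<or> subseq (brb_chain a) ch}"

text \<open>Q_N is the power set of {0..<N}; a blue/red coloring is c :: nat set => color
  (only its values on subsets of {0..<N} matter). A copy of a colored chain is a
  strictly increasing sequence of elements of Q_N with matching colors (any set of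
  pairwise comparable elements induces a chain).\<close>
definition contains_chain :: "nat \<Rightarrow> (nat set \<Rightarrow> color) \<Rightarrow> cchain \<Rightarrow> bool" where
  "contains_chain N c ch \<longleftrightarrow>
     (\<exists>S :: nat \<Rightarrow> nat set.
        (\<forall>i < length ch. S i \<subseteq> {0..<N} \<and> c (S i) = ch ! i) \<and>
        (\<forall>i j. i < j \<and> j < length ch \<longrightarrow> S i \<subset> S j))"

definition contains_mono_Q :: "nat \<Rightarrow> (nat set \<Rightarrow> color) \<Rightarrow> nat \<Rightarrow> bool" where
  "contains_mono_Q N c n \<longleftrightarrow>
     (\<exists>(f :: nat set \<Rightarrow> nat set) col.
        (\<forall>A. A \<subseteq> {0..<n} \<longrightarrow> f A \<subseteq> {0..<N} \<and> c (f A) = col) \<and>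
        (\<forall>A B. A \<subseteq> {0..<n} \<longrightarrow> B \<subseteq> {0..<n} \<longrightarrow> (f A \<subseteq> f B \<longleftrightarrow> A \<subseteq> B)))"

definition poset_EH :: "cchain \<Rightarrow> nat \<Rightarrow> nat" where
  "poset_EH ch n = (LEAST N. \<forall>c :: nat set \<Rightarrow> color.
       contains_chain N c ch \<or> contains_mono_Q N c n)"

end

theory Submission
  imports Defs
begin

definition EHP :: "cchain \<Rightarrow> nat \<Rightarrow> nat \<Rightarrow> bool" where
  "EHP ch n N \<longleftrightarrow> (\<forall>c. contains_chain N c ch \<or> contains_mono_Q N c n)"

lemma emb_index:
  assumes "list_emb P xs ys"
  shows "\<exists>h. (\<forall>i<length xs. h i < length ys \<and> P (xs!i) (ys!(h i))) \<and>
             (\<forall>i j. i<j \<and> j<length xs \<longrightarrow> h i < h j)"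
  using assms
proof (induction)
  case (list_emb_Nil ys)
  then show ?case by auto
next
  case (list_emb_Cons xs ys y)
  then obtain h where "\<forall>i<length xs. h i < length ys \<and> P (xs!i) (ys!(h i))"
    "\<forall>i j. i<j \<and> j<length xs \<longrightarrow> h i < h j" by blast
  then show ?case by (intro exI[of _ "Suc \<circ> h"]) auto
next
  case (list_emb_Cons2 x y xs ys)
  then obtain h where h1: "\<forall>i<length xs. h i < length ys \<and> P (xs!i) (ys!(h i))"
    and h2: "\<forall>i j. i<j \<and> j<length xs \<longrightarrow> h i < h j" by blast
  define h' where "h' i = (case i of 0 \<Rightarrow> 0 | Suc k \<Rightarrow> Suc (h k))" for i
  have "\<forall>i<length (x#xs). h' i < length (y#ys) \<and> P ((x#xs)!i) ((y#ys)!(h' i))"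
  proof (intro allI impI)
    fix i assume "i < length (x#xs)"
    then show "h' i < length (y#ys) \<and> P ((x#xs)!i) ((y#ys)!(h' i))"
      using h1 list_emb_Cons2.hyps(1) by (cases i) (auto simp: h'_def)
  qed
  moreover have "\<forall>i j. i<j \<and> j<length (x#xs) \<longrightarrow> h' i < h' j"
  proof (intro allI impI)
    fix i j assume "i<j \<and> j<length (x#xs)"
    then show "h' i < h' j"
      using h2 by (cases i; cases j) (auto simp: h'_def)
  qed
  ultimately show ?case by blast
qed

lemma contains_subseq:
  assumes "subseq xs ys" "contains_chain N c ys"
  shows "contains_chain N c xs"
proof -
  obtain h where h1: "\<forall>i<length xs. h i < length ys \<and> xs!i = ys!(h i)"
    and h2: "\<forall>i j. i<j \<and> j<length xs \<longrightarrow> h i < h j"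
    using emb_index[OF assms(1)] by blast
  obtain S where S1: "\<forall>i < length ys. S i \<subseteq> {0..<N} \<and> c (S i) = ys ! i"
    and S2: "\<forall>i j. i < j \<and> j < length ys \<longrightarrow> S i \<subset> S j"
    using assms(2) unfolding contains_chain_def by blast
  have A: "\<forall>i<length xs. (S \<circ> h) i \<subseteq> {0..<N} \<and> c ((S \<circ> h) i) = xs ! i"
    using h1 S1 by auto
  have B: "\<forall>i j. i < j \<and> j < length xs \<longrightarrow> (S \<circ> h) i \<subset> (S \<circ> h) j"
    using h1 h2 S2 by auto
  show ?thesis unfolding contains_chain_def using A B by blast
qed

lemma EHP_subseq: "subseq xs ys \<Longrightarrow> EHP ys n N \<Longrightarrow> EHP xs n N"
  unfolding EHP_def using contains_subseq by blast

fun sw :: "color \<Rightarrow> color" where "sw Red = Blue" | "sw Blue = Red"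

lemma sw_sw[simp]: "sw (sw y) = y" by (cases y) auto
lemma neq_sw: "y \<noteq> z \<Longrightarrow> y = sw z" by (cases y; cases z) auto

lemma EHP_swap:
  assumes "EHP ch n N" shows "EHP (map sw ch) n N"
  unfolding EHP_def
proof
  fix c :: "nat set \<Rightarrow> color"
  have "contains_chain N (sw \<circ> c) ch \<or> contains_mono_Q N (sw \<circ> c) n"
    using assms unfolding EHP_def by blast
  then show "contains_chain N c (map sw ch) \<or> contains_mono_Q N c n"
  proof
    assume "contains_chain N (sw \<circ> c) ch"
    then obtain S where S1: "\<forall>i < length ch. S i \<subseteq> {0..<N} \<and> sw (c (S i)) = ch ! i"
      and S2: "\<forall>i j. i < j \<and> j < length ch \<longrightarrow> S i \<subset> S j"
      unfolding contains_chain_def by auto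
    have "\<forall>i < length ch. S i \<subseteq> {0..<N} \<and> c (S i) = map sw ch ! i"
      using S1 by (metis nth_map sw_sw)
    then show ?thesis unfolding contains_chain_def using S2 by auto
  next
    assume "contains_mono_Q N (sw \<circ> c) n"
    then obtain f col where f1: "\<forall>A. A \<subseteq> {0..<n} \<longrightarrow> f A \<subseteq> {0..<N} \<and> sw (c (f A)) = col"
      and f2: "\<forall>A B. A \<subseteq> {0..<n} \<longrightarrow> B \<subseteq> {0..<n} \<longrightarrow> (f A \<subseteq> f B \<longleftrightarrow> A \<subseteq> B)"
      unfolding contains_mono_Q_def by auto
    have "\<forall>A. A \<subseteq> {0..<n} \<longrightarrow> f A \<subseteq> {0..<N} \<and> c (f A) = sw col"
      using f1 by (metis sw_sw)
    then show ?thesis unfolding contains_mono_Q_def using f2 by blast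
  qed
qed

lemma brb_sw: "brb_chain a = map sw (rbr_chain a)"
  by (simp add: brb_chain_def rbr_chain_def)
lemma rbr_sw: "rbr_chain a = map sw (brb_chain a)"
  by (simp add: brb_chain_def rbr_chain_def)


lemma dup:
  assumes "EHP (a @ x # b) n N" shows "EHP (a @ x # x # b) n (Suc N)"
  unfolding EHP_def
proof
  fix c :: "nat set \<Rightarrow> color"
  define k where "k = length a"
  define BC where "BC T \<longleftrightarrow> (\<exists>S'. (\<forall>i\<le>k. S' i \<subseteq> {0..<N} \<and> c (S' i) = (a@[x])!i) \<and>
      (\<forall>i j. i<j \<and> j\<le>k \<longrightarrow> S' i \<subset> S' j) \<and> S' k = T)" for T
  define U where "U = {S. \<exists>T\<subseteq>S. BC T}"
  define g where "g S = (if S \<in> U then insert N S else S)" for S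
  have Uup: "S \<in> U \<Longrightarrow> S \<subseteq> T \<Longrightarrow> T \<in> U" for S T unfolding U_def by blast
  have gemb: "S \<subseteq> {0..<N} \<Longrightarrow> T \<subseteq> {0..<N} \<Longrightarrow> (g S \<subseteq> g T \<longleftrightarrow> S \<subseteq> T)" for S T
  proof -
    assume a1: "S \<subseteq> {0..<N}" and a2: "T \<subseteq> {0..<N}"
    show ?thesis
    proof
      assume "g S \<subseteq> g T"
      moreover have "S \<subseteq> g S" "g T \<subseteq> insert N T" unfolding g_def by auto
      moreover have "N \<notin> S" using a1 by auto
      ultimately show "S \<subseteq> T" by blast
    next
      assume "S \<subseteq> T"
      then show "g S \<subseteq> g T" unfolding g_def using Uup by auto
    qed
  qed
  have gsub: "S \<subseteq> {0..<N} \<Longrightarrow> g S \<subseteq> {0..<Suc N}" for S unfolding g_def by auto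
  have "contains_chain N (c \<circ> g) (a@x#b) \<or> contains_mono_Q N (c \<circ> g) n"
    using assms by (simp add: EHP_def)
  then show "contains_chain (Suc N) c (a@x#x#b) \<or> contains_mono_Q (Suc N) c n"
  proof
    assume "contains_mono_Q N (c \<circ> g) n"
    then obtain f col where f1: "\<forall>A. A \<subseteq> {0..<n} \<longrightarrow> f A \<subseteq> {0..<N} \<and> c (g (f A)) = col"
      and f2: "\<forall>A B. A \<subseteq> {0..<n} \<longrightarrow> B \<subseteq> {0..<n} \<longrightarrow> (f A \<subseteq> f B \<longleftrightarrow> A \<subseteq> B)"
      unfolding contains_mono_Q_def by auto
    have "\<forall>A. A \<subseteq> {0..<n} \<longrightarrow> (g \<circ> f) A \<subseteq> {0..<Suc N} \<and> c ((g \<circ> f) A) = col"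
      using f1 gsub by auto
    moreover have "\<forall>A B. A \<subseteq> {0..<n} \<longrightarrow> B \<subseteq> {0..<n} \<longrightarrow> ((g \<circ> f) A \<subseteq> (g \<circ> f) B \<longleftrightarrow> A \<subseteq> B)"
      using f1 f2 gemb by auto
    ultimately have "contains_mono_Q (Suc N) c n" unfolding contains_mono_Q_def by blast
    then show ?thesis ..
  next
    assume "contains_chain N (c \<circ> g) (a@x#b)"
    then obtain S where S1: "\<forall>i<length (a@x#b). S i \<subseteq> {0..<N} \<and> c (g (S i)) = (a@x#b)!i"
      and S2: "\<forall>i j. i<j \<and> j<length (a@x#b) \<longrightarrow> S i \<subset> S j"
      unfolding contains_chain_def by auto
    have nth1: "i \<le> k \<Longrightarrow> (a@x#b)!i = (a@[x])!i" for i
      unfolding k_def by (cases "i < length a") (auto simp: nth_append)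
    have nth2: "i \<le> k \<Longrightarrow> (a@x#x#b)!i = (a@[x])!i" for i
      unfolding k_def by (cases "i < length a") (auto simp: nth_append)
    have nth3: "k < i \<Longrightarrow> (a@x#x#b)!i = (a@x#b)!(i-1)" for i
      unfolding k_def by (cases "i = Suc (length a)") (auto simp: nth_append nth_Cons')
    have "S k \<in> U"
    proof (rule ccontr)
      assume nU: "S k \<notin> U"
      have nUi: "i \<le> k \<Longrightarrow> S i \<notin> U" for i
      proof -
        assume "i \<le> k"
        then have "S i \<subseteq> S k"
        proof (cases "i = k")
          case False
          then have "S i \<subset> S k" using S2 \<open>i \<le> k\<close> k_def by auto
          then show ?thesis by auto
        qed simp
        then show ?thesis using nU Uup by blast
      qed
      have "BC (S k)" unfolding BC_def
      proof (intro exI[of _ S] conjI)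
        show "\<forall>i\<le>k. S i \<subseteq> {0..<N} \<and> c (S i) = (a@[x])!i"
        proof (intro allI impI)
          fix i assume "i \<le> k"
          then have "i < length (a@x#b)" unfolding k_def by simp
          then show "S i \<subseteq> {0..<N} \<and> c (S i) = (a@[x])!i"
            using S1 nUi[OF \<open>i \<le> k\<close>] nth1[OF \<open>i \<le> k\<close>] unfolding g_def by auto
        qed
        show "\<forall>i j. i<j \<and> j\<le>k \<longrightarrow> S i \<subset> S j" using S2 unfolding k_def by auto
      qed simp
      then show False using nU unfolding U_def by blast
    qed
    then obtain T where T: "T \<subseteq> S k" "BC T" by (auto simp: U_def)
    then obtain S' where S'1: "\<forall>i\<le>k. S' i \<subseteq> {0..<N} \<and> c (S' i) = (a@[x])!i"
      and S'2: "\<forall>i j. i<j \<and> j\<le>k \<longrightarrow> S' i \<subset> S' j" and S'3: "S' k = T"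
      unfolding BC_def by blast
    define R where "R i = (if i \<le> k then S' i else g (S (i - 1)))" for i
    have A: "\<forall>i<length (a@x#x#b). R i \<subseteq> {0..<Suc N} \<and> c (R i) = (a@x#x#b)!i"
    proof (intro allI impI)
      fix i assume i: "i < length (a@x#x#b)"
      show "R i \<subseteq> {0..<Suc N} \<and> c (R i) = (a@x#x#b)!i"
      proof (cases "i \<le> k")
        case True
        then have "S' i \<subseteq> {0..<N}" "c (S' i) = (a@[x])!i" using S'1 by auto
        then show ?thesis using True nth2 unfolding R_def by auto
      next
        case False
        then have "i - 1 < length (a@x#b)" using i unfolding k_def by simp
        then show ?thesis using False S1 gsub nth3[of i] unfolding R_def by auto
      qed
    qed
    have gS: "i < j \<Longrightarrow> j < length (a@x#b) \<Longrightarrow> g (S i) \<subset> g (S j)" for i j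
      using S1 S2 gemb by (metis less_trans psubset_eq)
    have B: "\<forall>i j. i<j \<and> j<length (a@x#x#b) \<longrightarrow> R i \<subset> R j"
    proof (intro allI impI)
      fix i j assume ij: "i<j \<and> j<length (a@x#x#b)"
      show "R i \<subset> R j"
      proof (cases "j \<le> k")
        case True
        then show ?thesis using ij S'2 unfolding R_def by auto
      next
        case jF: False
        have jl: "j - 1 < length (a@x#b)" using ij unfolding k_def by auto
        show ?thesis
        proof (cases "i \<le> k")
          case False
          then have "i - 1 < j - 1" using ij by auto
          then have "g (S (i-1)) \<subset> g (S (j-1))" using gS jl by blast
          then show ?thesis using jF False unfolding R_def by auto
        next
          case True
          have "S' i \<subseteq> T"
          proof (cases "i = k")
            case False
            then have "S' i \<subset> S' k" using True S'2 by auto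
            then show ?thesis using S'3 by auto
          qed (use S'3 in simp)
          then have "S' i \<subseteq> S k" using T by auto
          moreover have "N \<notin> S' i"
          proof -
            have "S' i \<subseteq> {0..<N}" using S'1 True by blast
            then show ?thesis by auto
          qed
          moreover have "g (S k) = insert N (S k)" using \<open>S k \<in> U\<close> unfolding g_def by auto
          moreover have "g (S k) \<subseteq> g (S (j - 1))"
          proof (cases "j - 1 = k")
            case False
            then have "k < j - 1" using jF by auto
            then show ?thesis using gS[of k "j-1"] jl by auto
          qed simp
          ultimately show ?thesis using True jF unfolding R_def by auto
        qed
      qed
    qed
    have "contains_chain (Suc N) c (a@x#x#b)" unfolding contains_chain_def using A B by blast
    then show ?thesis ..
  qed
qed


lemma prep:
  assumes "EHP ch n N" shows "EHP (z # ch) n (N + Suc n)"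
  unfolding EHP_def
proof
  fix c :: "nat set \<Rightarrow> color"
  define E where "E = {N..<N + Suc n}"
  show "contains_chain (N + Suc n) c (z # ch) \<or> contains_mono_Q (N + Suc n) c n"
  proof (cases "\<exists>S\<subseteq>{0..<N}. \<forall>P\<subseteq>E. P \<noteq> E \<longrightarrow> c (S \<union> P) \<noteq> z")
    case True
    then obtain S where S: "S \<subseteq> {0..<N}" "\<forall>P\<subseteq>E. P \<noteq> E \<longrightarrow> c (S \<union> P) \<noteq> z" by blast
    define f where "f A = S \<union> (\<lambda>i. N + i) ` A" for A
    have "\<forall>A. A \<subseteq> {0..<n} \<longrightarrow> f A \<subseteq> {0..<N + Suc n} \<and> c (f A) = sw z"
    proof (intro allI impI)
      fix A assume A: "A \<subseteq> {0..<n}"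
      have sub: "(\<lambda>i. N + i) ` A \<subseteq> E" using A unfolding E_def by auto
      have ne: "(\<lambda>i. N + i) ` A \<noteq> E"
      proof
        assume "(\<lambda>i. N + i) ` A = E"
        then have "N + n \<in> (\<lambda>i. N + i) ` A" unfolding E_def by auto
        then show False using A by auto
      qed
      have "c (f A) \<noteq> z" using S(2) sub ne unfolding f_def by blast
      then show "f A \<subseteq> {0..<N + Suc n} \<and> c (f A) = sw z"
        using S(1) A neq_sw unfolding f_def by auto
    qed
    moreover have "\<forall>A B. A \<subseteq> {0..<n} \<longrightarrow> B \<subseteq> {0..<n} \<longrightarrow> (f A \<subseteq> f B \<longleftrightarrow> A \<subseteq> B)"
    proof (intro allI impI)
      fix A B :: "nat set"
      show "f A \<subseteq> f B \<longleftrightarrow> A \<subseteq> B"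
      proof
        assume h: "f A \<subseteq> f B"
        show "A \<subseteq> B"
        proof
          fix i assume "i \<in> A"
          then have "N + i \<in> f B" using h unfolding f_def by auto
          moreover have "N + i \<notin> S" using S(1) by auto
          ultimately show "i \<in> B" unfolding f_def by auto
        qed
      qed (auto simp: f_def)
    qed
    ultimately have "contains_mono_Q (N + Suc n) c n" unfolding contains_mono_Q_def by blast
    then show ?thesis ..
  next
    case False
    then have B: "\<forall>S\<subseteq>{0..<N}. \<exists>P\<subseteq>E. P \<noteq> E \<and> c (S \<union> P) = z" by blast
    define g where "g S = S \<union> E" for S
    have gemb: "S \<subseteq> {0..<N} \<Longrightarrow> T \<subseteq> {0..<N} \<Longrightarrow> (g S \<subseteq> g T \<longleftrightarrow> S \<subseteq> T)" for S T
      unfolding g_def E_def by (auto simp: subset_iff) (meson atLeastLessThan_iff not_le)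
    have gsub: "S \<subseteq> {0..<N} \<Longrightarrow> g S \<subseteq> {0..<N + Suc n}" for S
      unfolding g_def E_def by auto
    have "contains_chain N (c \<circ> g) ch \<or> contains_mono_Q N (c \<circ> g) n"
      using assms by (simp add: EHP_def)
    then show ?thesis
    proof
      assume "contains_mono_Q N (c \<circ> g) n"
      then obtain f col where f1: "\<forall>A. A \<subseteq> {0..<n} \<longrightarrow> f A \<subseteq> {0..<N} \<and> c (g (f A)) = col"
        and f2: "\<forall>A B. A \<subseteq> {0..<n} \<longrightarrow> B \<subseteq> {0..<n} \<longrightarrow> (f A \<subseteq> f B \<longleftrightarrow> A \<subseteq> B)"
        unfolding contains_mono_Q_def by auto
      have "\<forall>A. A \<subseteq> {0..<n} \<longrightarrow> (g \<circ> f) A \<subseteq> {0..<N + Suc n} \<and> c ((g \<circ> f) A) = col"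
        using f1 gsub by auto
      moreover have "\<forall>A B. A \<subseteq> {0..<n} \<longrightarrow> B \<subseteq> {0..<n} \<longrightarrow> ((g \<circ> f) A \<subseteq> (g \<circ> f) B \<longleftrightarrow> A \<subseteq> B)"
        using f1 f2 gemb by auto
      ultimately have "contains_mono_Q (N + Suc n) c n" unfolding contains_mono_Q_def by blast
      then show ?thesis ..
    next
      assume "contains_chain N (c \<circ> g) ch"
      then obtain S where S1: "\<forall>i<length ch. S i \<subseteq> {0..<N} \<and> c (g (S i)) = ch!i"
        and S2: "\<forall>i j. i<j \<and> j<length ch \<longrightarrow> S i \<subset> S j"
        unfolding contains_chain_def by auto
      define T0 where "T0 = S 0 \<inter> {0..<N}"
      obtain P0 where P0: "P0 \<subseteq> E" "P0 \<noteq> E" "c (T0 \<union> P0) = z" 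
      proof -
        have "T0 \<subseteq> {0..<N}" unfolding T0_def by blast
        then show ?thesis using B that by blast
      qed
      obtain e where e: "e \<in> E" "e \<notin> P0" using P0 by blast
      define R where "R i = (if i = 0 then T0 \<union> P0 else g (S (i - 1)))" for i
      have A: "\<forall>i<length (z#ch). R i \<subseteq> {0..<N + Suc n} \<and> c (R i) = (z#ch)!i"
      proof (intro allI impI)
        fix i assume i: "i < length (z#ch)"
        show "R i \<subseteq> {0..<N + Suc n} \<and> c (R i) = (z#ch)!i"
        proof (cases "i = 0")
          case True
          then show ?thesis using P0 unfolding R_def T0_def E_def by auto
        next
          case False
          then have "i - 1 < length ch" using i by auto
          then show ?thesis using False S1 gsub unfolding R_def
            by (cases i) auto
        qed
      qed
      have Bc: "\<forall>i j. i<j \<and> j<length (z#ch) \<longrightarrow> R i \<subset> R j"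
      proof (intro allI impI)
        fix i j assume ij: "i<j \<and> j<length (z#ch)"
        then have jl: "j - 1 < length ch" by auto
        show "R i \<subset> R j"
        proof (cases "i = 0")
          case True
          have "S 0 \<subseteq> S (j - 1)"
          proof (cases "j - 1 = 0")
            case False
            then have "S 0 \<subset> S (j - 1)" using S2 jl by blast
            then show ?thesis by auto
          qed simp
          then have "T0 \<union> P0 \<subseteq> S (j - 1) \<union> E" using P0 unfolding T0_def by auto
          moreover have "e \<notin> T0 \<union> P0" using e unfolding T0_def E_def by auto
          ultimately show ?thesis using True ij e unfolding R_def g_def by auto
        next
          case False
          then have "i - 1 < j - 1" using ij by auto
          then have "S (i-1) \<subset> S (j-1)" using S2 jl by blast
          moreover have "S (i-1) \<subseteq> {0..<N}" "S (j-1) \<subseteq> {0..<N}" using S1 jl \<open>i - 1 < j - 1\<close> by auto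
          ultimately have "g (S (i-1)) \<subset> g (S (j-1))" using gemb by blast
          then show ?thesis using False ij unfolding R_def by auto
        qed
      qed
      have "contains_chain (N + Suc n) c (z#ch)" unfolding contains_chain_def using A Bc by blast
      then show ?thesis ..
    qed
  qed
qed

lemma EHP_ex: "\<exists>N. EHP ch n N"
proof (induction ch)
  case Nil
  have "EHP [] n 0" unfolding EHP_def contains_chain_def by auto
  then show ?case by blast
next
  case (Cons z ch)
  then show ?case using prep by blast
qed


lemma rem_EHP:
  "\<forall>pre N. EHP (pre @ remdups_adj ch) n N \<longrightarrow>
      EHP (pre @ ch) n (N + (length ch - length (remdups_adj ch)))"
proof (induction ch rule: remdups_adj.induct)
  case 1
  then show ?case by simp
next
  case (2 x)
  then show ?case by simp
next
  case (3 x y xs)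
  show ?case
  proof (cases "x = y")
    case True
    have le: "length (remdups_adj (x # xs)) \<le> length (x # xs)" by (rule remdups_adj_length)
    show ?thesis
    proof (intro allI impI)
      fix pre N assume h: "EHP (pre @ remdups_adj (x # y # xs)) n N"
      then have "EHP (pre @ remdups_adj (x # xs)) n N" using True by simp
      then have "EHP (pre @ x # xs) n (N + (length (x#xs) - length (remdups_adj (x # xs))))"
        using 3(1)[OF True] by blast
      then have "EHP (pre @ x # x # xs) n (Suc (N + (length (x#xs) - length (remdups_adj (x # xs)))))"
        by (rule dup)
      moreover have "Suc (N + (length (x#xs) - length (remdups_adj (x # xs)))) =
          N + (length (x # y # xs) - length (remdups_adj (x # y # xs)))"
        using True le by simp
      ultimately show "EHP (pre @ x # y # xs) n (N + (length (x # y # xs) - length (remdups_adj (x # y # xs))))"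
        using True by metis
    qed
  next
    case False
    show ?thesis
    proof (intro allI impI)
      fix pre N assume h: "EHP (pre @ remdups_adj (x # y # xs)) n N"
      then have "EHP ((pre @ [x]) @ remdups_adj (y # xs)) n N" using False by simp
      then have "EHP ((pre @ [x]) @ y # xs) n (N + (length (y#xs) - length (remdups_adj (y # xs))))"
        using 3(2)[OF False] by blast
      then show "EHP (pre @ x # y # xs) n (N + (length (x # y # xs) - length (remdups_adj (x # y # xs))))"
        using False by simp
    qed
  qed
qed

definition alt :: "color list \<Rightarrow> bool" where
  "alt xs \<longleftrightarrow> (\<forall>i. Suc i < length xs \<longrightarrow> xs!i \<noteq> xs!Suc i)"

lemma alt_rem: "alt (remdups_adj xs)"
  unfolding alt_def using remdups_adj_adjacent by blast

lemma alt_tl: "alt (x # xs) \<Longrightarrow> alt xs"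
  unfolding alt_def
proof (intro allI impI)
  fix i assume a: "\<forall>i. Suc i < length (x # xs) \<longrightarrow> (x # xs) ! i \<noteq> (x # xs) ! Suc i"
    and "Suc i < length xs"
  then have "(x # xs) ! Suc i \<noteq> (x # xs) ! Suc (Suc i)" by auto
  then show "xs ! i \<noteq> xs ! Suc i" by simp
qed

lemma alt_rbr: "alt (rbr_chain a)" unfolding alt_def rbr_chain_def by auto
lemma alt_brb: "alt (brb_chain a)" unfolding alt_def brb_chain_def by auto

lemma length_rbr[simp]: "length (rbr_chain a) = a" by (simp add: rbr_chain_def)
lemma length_brb[simp]: "length (brb_chain a) = a" by (simp add: brb_chain_def)

lemma alt_form:
  assumes "alt xs" shows "xs = rbr_chain (length xs) \<or> xs = brb_chain (length xs)"
proof (cases "xs = []")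
  case True
  then show ?thesis by (simp add: rbr_chain_def)
next
  case False
  have key: "i < length xs \<Longrightarrow> xs!i = (if even i then xs!0 else sw (xs!0))" for i
  proof (induction i)
    case 0
    then show ?case by simp
  next
    case (Suc i)
    then have "xs!i \<noteq> xs!Suc i" using assms unfolding alt_def by blast
    then have "xs!Suc i = sw (xs!i)" using neq_sw by metis
    then show ?case using Suc by auto
  qed
  show ?thesis
  proof (cases "xs!0")
    case Red
    have "xs = rbr_chain (length xs)"
      by (rule nth_equalityI) (auto simp: rbr_chain_def key Red)
    then show ?thesis ..
  next
    case Blue
    have "xs = brb_chain (length xs)"
      by (rule nth_equalityI) (auto simp: brb_chain_def key Blue)
    then show ?thesis ..
  qed
qed

lemma subseq_rem: "subseq (remdups_adj ys) ys"
  by (induction ys rule: remdups_adj.induct) auto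

lemma alt_subseq_rem: "alt xs \<Longrightarrow> subseq xs ys \<Longrightarrow> subseq xs (remdups_adj ys)"
proof (induction ys arbitrary: xs rule: remdups_adj.induct)
  case 1
  then show ?case by simp
next
  case (2 y)
  then show ?case by simp
next
  case (3 y1 y2 zs)
  show ?case
  proof (cases "y1 = y2")
    case True
    have "subseq xs (y1 # zs)"
    proof (cases xs)
      case Nil
      then show ?thesis by simp
    next
      case (Cons x xs')
      show ?thesis
      proof (cases "x = y1")
        case False
        then show ?thesis using 3(4) Cons True by simp
      next
        case xT: True
        then have s: "subseq xs' (y1 # zs)" using 3(4) Cons True by simp
        have "subseq xs' zs"
        proof (cases xs')
          case Nil
          then show ?thesis by simp
        next
          case (Cons x2 xs'')
          have "x2 \<noteq> x" using 3(3) \<open>xs = x # xs'\<close> Cons unfolding alt_def by fastforce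
          then show ?thesis using s Cons xT by simp
        qed
        then show ?thesis using Cons xT by simp
      qed
    qed
    then show ?thesis using 3(1)[OF True 3(3)] True by simp
  next
    case False
    show ?thesis
    proof (cases xs)
      case Nil
      then show ?thesis by simp
    next
      case (Cons x xs')
      show ?thesis
      proof (cases "x = y1")
        case True
        then have "subseq xs' (y2 # zs)" using 3(4) Cons by simp
        then have "subseq xs' (remdups_adj (y2 # zs))"
          using 3(2)[OF False] alt_tl 3(3) Cons by blast
        then show ?thesis using Cons True False by simp
      next
        case xF: False
        then have "subseq xs (y2 # zs)" using 3(4) Cons by simp
        then have "subseq xs (remdups_adj (y2 # zs))" using 3(2)[OF False] 3(3) by blast
        then show ?thesis using False by (simp add: list_emb_Cons)
      qed
    qed
  qed
qed

lemma alpha_rem: "alpha ch = length (remdups_adj ch)"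
proof -
  define A where "A = {a. subseq (rbr_chain a) ch \<or> subseq (brb_chain a) ch}"
  have fin: "finite A"
  proof (rule finite_subset)
    show "A \<subseteq> {..length ch}" unfolding A_def
      by (auto dest!: list_emb_length)
  qed simp
  have mem: "length (remdups_adj ch) \<in> A"
  proof (cases "remdups_adj ch = rbr_chain (length (remdups_adj ch))")
    case True
    then have "subseq (rbr_chain (length (remdups_adj ch))) ch" using subseq_rem[of ch] by simp
    then show ?thesis unfolding A_def by blast
  next
    case False
    then have "remdups_adj ch = brb_chain (length (remdups_adj ch))" using alt_form[OF alt_rem, of ch] by blast
    then have "subseq (brb_chain (length (remdups_adj ch))) ch" using subseq_rem[of ch] by simp
    then show ?thesis unfolding A_def by blast
  qed
  have ub: "a \<in> A \<Longrightarrow> a \<le> length (remdups_adj ch)" for a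
  proof -
    assume "a \<in> A"
    then have "subseq (rbr_chain a) (remdups_adj ch) \<or> subseq (brb_chain a) (remdups_adj ch)"
      unfolding A_def using alt_subseq_rem alt_rbr alt_brb by blast
    then show ?thesis by (auto dest!: list_emb_length)
  qed
  show ?thesis unfolding alpha_def A_def[symmetric]
    using fin mem ub by (intro Max_eqI) auto
qed

lemma EHP_least: "EHP ch n (poset_EH ch n)"
  unfolding poset_EH_def EHP_def[symmetric] using EHP_ex by (rule LeastI_ex)

lemma EHP_le: "EHP ch n M \<Longrightarrow> poset_EH ch n \<le> M"
  unfolding poset_EH_def EHP_def[symmetric] by (rule Least_le)

theorem theorem4:
  fixes n :: nat and ch :: cchain
  assumes "n \<ge> 1"
  shows "poset_EH (rbr_chain (alpha ch)) n \<le> poset_EH ch n \<and>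
         poset_EH ch n \<le> poset_EH (rbr_chain (alpha ch)) n + length ch - alpha ch"
proof
  define r where "r = remdups_adj ch"
  have al: "alpha ch = length r" unfolding r_def by (rule alpha_rem)
  have rf: "r = rbr_chain (alpha ch) \<or> r = brb_chain (alpha ch)"
    using alt_form[OF alt_rem, of ch] al r_def by simp
  have conv: "EHP r n M \<Longrightarrow> EHP (rbr_chain (alpha ch)) n M" for M
  proof -
    assume h: "EHP r n M"
    show ?thesis
    proof (cases "r = rbr_chain (alpha ch)")
      case True then show ?thesis using h by simp
    next
      case False
      then have "r = brb_chain (alpha ch)" using rf by blast
      then have "EHP (map sw (brb_chain (alpha ch))) n M" using h EHP_swap by blast
      then show ?thesis by (simp only: rbr_sw[symmetric])
    qed
  qed
  have conv2: "EHP (rbr_chain (alpha ch)) n M \<Longrightarrow> EHP r n M" for M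
  proof -
    assume h: "EHP (rbr_chain (alpha ch)) n M"
    show ?thesis
    proof (cases "r = rbr_chain (alpha ch)")
      case True then show ?thesis using h by simp
    next
      case False
      then have "r = brb_chain (alpha ch)" using rf by blast
      moreover have "EHP (map sw (rbr_chain (alpha ch))) n M" using h EHP_swap by blast
      ultimately show ?thesis by (simp only: brb_sw)
    qed
  qed
  have "EHP r n (poset_EH ch n)"
    using EHP_subseq[OF subseq_rem EHP_least] r_def by simp
  then show "poset_EH (rbr_chain (alpha ch)) n \<le> poset_EH ch n"
    using conv EHP_le by blast
  have "EHP r n (poset_EH (rbr_chain (alpha ch)) n)" using conv2 EHP_least by blast
  then have "EHP ch n (poset_EH (rbr_chain (alpha ch)) n + (length ch - length r))"
    using rem_EHP[where ch=ch and n=n] r_def by (metis append.left_neutral)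
  moreover have a2: "length r \<le> length ch" unfolding r_def by simp
  ultimately have "poset_EH ch n \<le> poset_EH (rbr_chain (alpha ch)) n + (length ch - length r)"
    using EHP_le by blast
  then show "poset_EH ch n \<le> poset_EH (rbr_chain (alpha ch)) n + length ch - alpha ch"
    using a2 al by simp
qed

end
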